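(* Let $k$ be an integer, $m$ a positive integer and $p$ a prime, and let $g_k(m)=\sum_{d>0,\,d^2\mid m}\mu(d)\sigma_{k-1}(m/d^2)$, where $\mu$ is the Möbius function and $\sigma_{k-1}(m)=\sum_{d>0,\,d\mid m}d^{k-1}$. Then $g_k(mp)=(p^{k-1}+1)g_k(m)$ if $p\nmid m$, and $g_k(mp)=p^{k-1}g_k(m)$ if $p\mid m$. *)

theory Defs
  imports Complex_Main "HOL-Computational_Algebra.Squarefree" "HOL-Computational_Algebra.Primes"
begin

definition moebius_mu :: "nat \<Rightarrow> int" where
  "moebius_mu d = (if squarefree d then (-1) ^ card (prime_factors d) else 0)"

definition divisor_sigma :: "int \<Rightarrow> nat \<Rightarrow> real" where
  "divisor_sigma s n = (\<Sum>d \<in> {d. 0 < d \<and> d dvd n}. real d powi s)"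

definition g_fun :: "int \<Rightarrow> nat \<Rightarrow> real" where
  "g_fun k m = (\<Sum>d \<in> {d. 0 < d \<and> d^2 dvd m}. of_int (moebius_mu d) * divisor_sigma (k - 1) (m div d^2))"

end

theory Submission
  imports Defs
begin

definition tau :: "nat \<Rightarrow> int \<Rightarrow> nat \<Rightarrow> real" where
  "tau p s X = (\<Sum>e\<in>{e. 0 < e \<and> e dvd X \<and> \<not> p dvd e}. real e powi s)"
definition nu :: "nat \<Rightarrow> nat \<Rightarrow> int" where
  "nu p d = (if p dvd d then 0 else moebius_mu d)"
definition DD :: "nat \<Rightarrow> nat set" where
  "DD X = {d. 0 < d \<and> d^2 dvd X}"

lemma finite_DD: "X > 0 \<Longrightarrow> finite (DD X)"
proof -
  assume "X > 0"
  have "DD X \<subseteq> {..X}"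
  proof
    fix d assume "d \<in> DD X"
    then have "0 < d" "d^2 dvd X" by (auto simp: DD_def)
    then have "d^2 \<le> X" using \<open>X>0\<close> dvd_imp_le by blast
    moreover have "d \<le> d^2" using \<open>0<d\<close> by (simp add: power2_eq_square)
    ultimately show "d \<in> {..X}" by simp
  qed
  then show ?thesis using finite_subset by blast
qed

lemma finite_divs: "X > 0 \<Longrightarrow> finite {e::nat. 0 < e \<and> e dvd X \<and> P e}"
  by (rule finite_subset[of _ "{..X}"]) (auto dest: dvd_imp_le)

lemma sigma_p:
  assumes p: "prime p" and X: "X > 0"
  shows "divisor_sigma s (p * X) = tau p s X + real p powi s * divisor_sigma s X"
proof -
  have split: "{e. 0 < e \<and> e dvd p * X} = {e. 0 < e \<and> e dvd X \<and> \<not> p dvd e} \<union> (\<lambda>f. p * f) ` {f. 0 < f \<and> f dvd X}"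
  proof (intro equalityI subsetI)
    fix e assume "e \<in> {e. 0 < e \<and> e dvd p * X}"
    then have e: "0 < e" "e dvd p * X" by auto
    show "e \<in> {e. 0 < e \<and> e dvd X \<and> \<not> p dvd e} \<union> (\<lambda>f. p * f) ` {f. 0 < f \<and> f dvd X}"
    proof (cases "p dvd e")
      case True
      then obtain f where f: "e = p * f" by blast
      have "f dvd X" using e(2) p f by (simp add: prime_gt_0_nat) 
      then show ?thesis using f e by auto
    next
      case False
      then have "coprime e p" using p by (metis coprime_commute prime_imp_coprime)
      then have "e dvd X" using e(2) by (metis coprime_dvd_mult_right_iff)
      then show ?thesis using e False by auto
    qed
  qed (use p in \<open>auto simp: prime_gt_0_nat\<close>)
  have disj: "{e. 0 < e \<and> e dvd X \<and> \<not> p dvd e} \<inter> (\<lambda>f. p * f) ` {f. 0 < f \<and> f dvd X} = {}" by auto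
  have inj: "inj_on (\<lambda>f. p * f) {f. 0 < f \<and> f dvd X}" using p by (auto simp: inj_on_def dest: prime_gt_0_nat)
  have fin1: "finite {e. 0 < e \<and> e dvd X \<and> \<not> p dvd e}" using finite_divs[OF X] by simp
  have fin2: "finite {f. 0 < f \<and> f dvd X}" using finite_divs[OF X, of "\<lambda>_. True"] by simp
  have "divisor_sigma s (p * X) = tau p s X + (\<Sum>e\<in>(\<lambda>f. p * f) ` {f. 0 < f \<and> f dvd X}. real e powi s)"
    unfolding divisor_sigma_def tau_def split
    by (rule sum.union_disjoint[OF fin1 finite_imageI[OF fin2] disj])
  also have "(\<Sum>e\<in>(\<lambda>f. p * f) ` {f. 0 < f \<and> f dvd X}. real e powi s) = (\<Sum>f\<in>{f. 0 < f \<and> f dvd X}. real (p * f) powi s)"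
    by (rule sum.reindex[OF inj, unfolded comp_def])
  also have "\<dots> = real p powi s * divisor_sigma s X"
    unfolding divisor_sigma_def sum_distrib_left by (simp add: power_int_mult_distrib)
  finally show ?thesis .
qed

lemma tau_p:
  assumes p: "prime p"
  shows "tau p s (p * X) = tau p s X"
proof -
  have "{e. 0 < e \<and> e dvd p * X \<and> \<not> p dvd e} = {e. 0 < e \<and> e dvd X \<and> \<not> p dvd e}"
  proof (intro equalityI subsetI)
    fix e assume "e \<in> {e. 0 < e \<and> e dvd p * X \<and> \<not> p dvd e}"
    then have e: "0 < e" "e dvd p * X" "\<not> p dvd e" by auto
    then have "coprime e p" using p by (metis coprime_commute prime_imp_coprime)
    then have "e dvd X" using e(2) by (metis coprime_dvd_mult_right_iff)
    then show "e \<in> {e. 0 < e \<and> e dvd X \<and> \<not> p dvd e}" using e by auto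
  qed auto
  then show ?thesis unfolding tau_def by simp
qed

lemma tau_coprime:
  assumes "\<not> p dvd X"
  shows "tau p s X = divisor_sigma s X"
proof -
  have "{e. 0 < e \<and> e dvd X \<and> \<not> p dvd e} = {e. 0 < e \<and> e dvd X}"
    using assms dvd_trans by blast
  then show ?thesis unfolding tau_def divisor_sigma_def by simp
qed

lemma mu_p:
  assumes p: "prime p" and e: "e > 0"
  shows "moebius_mu (p * e) = - nu p e"
proof (cases "p dvd e")
  case True
  then have "p^2 dvd p * e" by (simp add: power2_eq_square)
  then have "\<not> squarefree (p * e)" using p unfolding squarefree_def by (metis nat_dvd_1_iff_1 not_prime_1)
  then show ?thesis using True by (simp add: moebius_mu_def nu_def)
next
  case False
  have cop: "coprime p e" using False p by (simp add: prime_imp_coprime)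
  have sq: "squarefree (p * e) \<longleftrightarrow> squarefree e"
    using squarefree_mult_coprime[OF cop squarefree_prime[OF p]] squarefree_multD(2)[of p e] by blast
  have pf: "prime_factors (p * e) = insert p (prime_factors e)"
    using prime_factors_product[of p e] p e prime_prime_factors[OF p] by (auto simp: prime_gt_0_nat)
  have "p \<notin> prime_factors e" using False by (auto dest: in_prime_factors_imp_dvd)
  then have "card (prime_factors (p * e)) = Suc (card (prime_factors e))" unfolding pf by simp
  then show ?thesis using False sq by (simp add: moebius_mu_def nu_def)
qed

definition FF :: "nat \<Rightarrow> int \<Rightarrow> nat \<Rightarrow> real" where
  "FF p s X = (\<Sum>d\<in>DD X. of_int (nu p d) * divisor_sigma s (X div d^2))"
definition FF' :: "nat \<Rightarrow> int \<Rightarrow> nat \<Rightarrow> real" where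
  "FF' p s X = (\<Sum>e\<in>{e. 0 < e \<and> (p*e)^2 dvd X}. of_int (nu p e) * divisor_sigma s (X div (p*e)^2))"

lemma shift:
  assumes p: "prime p" and X: "X > 0"
  shows "(\<Sum>d\<in>DD (p * X). of_int (nu p d) * h d) = (\<Sum>d\<in>DD X. of_int (nu p d) * (h d :: real))"
proof (rule sum.mono_neutral_right)
  show "finite (DD (p * X))" using finite_DD p X by (simp add: prime_gt_0_nat)
  show "DD X \<subseteq> DD (p * X)" by (auto simp: DD_def)
  show "\<forall>d\<in>DD (p * X) - DD X. of_int (nu p d) * h d = 0"
  proof
    fix d assume d: "d \<in> DD (p * X) - DD X"
    have "p dvd d"
    proof (rule ccontr)
      assume "\<not> p dvd d"
      then have "coprime (d^2) p" using p by (metis coprime_commute coprime_power_left_iff prime_imp_coprime)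
      then have "d^2 dvd X" using d by (auto simp: DD_def coprime_dvd_mult_right_iff)
      then show False using d by (auto simp: DD_def)
    qed
    then show "of_int (nu p d) * h d = 0" by (simp add: nu_def)
  qed
qed

lemma g_split:
  assumes p: "prime p" and X: "X > 0"
  shows "g_fun k X = FF p (k - 1) X - FF' p (k - 1) X"
proof -
  define f where "f d = divisor_sigma (k - 1) (X div d^2)" for d
  define E where "E = {e. 0 < e \<and> (p*e)^2 dvd X}"
  have fin: "finite (DD X)" using finite_DD X by simp
  have g: "g_fun k X = (\<Sum>d\<in>DD X. of_int (moebius_mu d) * f d)"
    unfolding g_fun_def DD_def f_def by simp
  also have "\<dots> = (\<Sum>d\<in>DD X \<inter> {d. p dvd d}. of_int (moebius_mu d) * f d)
       + (\<Sum>d\<in>DD X - {d. p dvd d}. of_int (moebius_mu d) * f d)"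
    by (rule sum.Int_Diff[OF fin])
  also have "(\<Sum>d\<in>DD X - {d. p dvd d}. of_int (moebius_mu d) * f d) = FF p (k - 1) X"
  proof -
    have "FF p (k - 1) X = (\<Sum>d\<in>DD X \<inter> {d. p dvd d}. of_int (nu p d) * f d)
       + (\<Sum>d\<in>DD X - {d. p dvd d}. of_int (nu p d) * f d)"
      unfolding FF_def f_def by (rule sum.Int_Diff[OF fin])
    also have "(\<Sum>d\<in>DD X \<inter> {d. p dvd d}. of_int (nu p d) * f d) = 0"
      by (rule sum.neutral) (auto simp: nu_def)
    also have "(\<Sum>d\<in>DD X - {d. p dvd d}. of_int (nu p d) * f d) = (\<Sum>d\<in>DD X - {d. p dvd d}. of_int (moebius_mu d) * f d)"
      by (rule sum.cong) (auto simp: nu_def)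
    finally show ?thesis by simp
  qed
  also have "(\<Sum>d\<in>DD X \<inter> {d. p dvd d}. of_int (moebius_mu d) * f d) = - FF' p (k - 1) X"
  proof -
    have img: "DD X \<inter> {d. p dvd d} = (\<lambda>e. p * e) ` E"
      using p by (auto simp: DD_def E_def prime_gt_0_nat)
    have inj: "inj_on (\<lambda>e. p * e) E" using p by (auto simp: inj_on_def dest: prime_gt_0_nat)
    have "(\<Sum>d\<in>DD X \<inter> {d. p dvd d}. of_int (moebius_mu d) * f d) = (\<Sum>e\<in>E. of_int (moebius_mu (p * e)) * f (p * e))"
      unfolding img by (rule sum.reindex[OF inj, unfolded comp_def])
    also have "\<dots> = (\<Sum>e\<in>E. - (of_int (nu p e) * f (p * e)))"
      by (rule sum.cong) (auto simp: E_def mu_p[OF p])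
    also have "\<dots> = - FF' p (k - 1) X"
      unfolding FF'_def E_def f_def by (simp add: sum_negf)
    finally show ?thesis .
  qed
  finally show ?thesis by simp
qed

lemma FF'_pp:
  assumes p: "prime p"
  shows "FF' p s (p * (p * M)) = FF p s M"
proof -
  have p0: "p > 0" using p by (simp add: prime_gt_0_nat)
  have "{e. 0 < e \<and> (p*e)^2 dvd p * (p * M)} = DD M"
    using p0 by (auto simp: DD_def power2_eq_square mult.assoc mult.left_commute)
  moreover have "p * (p * M) div (p*e)^2 = M div e^2" for e
    using p0 by (simp add: power2_eq_square mult.assoc mult.left_commute div_mult_mult1)
  ultimately show ?thesis unfolding FF'_def FF_def by simp
qed

lemma FF'_empty:
  assumes p: "prime p" and "\<not> p dvd M"
  shows "FF' p s (p * M) = 0"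
proof -
  have p0: "p > 0" using p by (simp add: prime_gt_0_nat)
  have em: "{e. 0 < e \<and> (p*e)^2 dvd p * M} = {}"
  proof (safe)
    fix e assume "0 < e" "(p*e)^2 dvd p * M"
    then have "p * (p * e^2) dvd p * M" by (simp add: power2_eq_square mult_ac)
    then have "p * e^2 dvd M" using p0 by simp
    then have "p dvd M" by (metis dvd_mult_left)
    then show "e \<in> {}" using assms by simp
  qed
  show ?thesis unfolding FF'_def em by simp
qed

lemma FF_p:
  assumes p: "prime p" and M: "M > 0"
  shows "FF p s (p * M) = (\<Sum>d\<in>DD M. of_int (nu p d) * divisor_sigma s (p * (M div d^2)))"
proof -
  have "FF p s (p * M) = (\<Sum>d\<in>DD M. of_int (nu p d) * divisor_sigma s (p * M div d^2))"
    unfolding FF_def by (rule shift[OF p M])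
  also have "\<dots> = (\<Sum>d\<in>DD M. of_int (nu p d) * divisor_sigma s (p * (M div d^2)))"
    by (rule sum.cong) (auto simp: DD_def div_mult_swap)
  finally show ?thesis .
qed

lemma FF_pp:
  assumes p: "prime p" and M: "M > 0"
  shows "FF p s (p * (p * M)) = (\<Sum>d\<in>DD M. of_int (nu p d) * divisor_sigma s (p * (p * (M div d^2))))"
proof -
  have pM: "p * M > 0" using p M by (simp add: prime_gt_0_nat)
  have "FF p s (p * (p * M)) = (\<Sum>d\<in>DD (p * M). of_int (nu p d) * divisor_sigma s (p * (p * M) div d^2))"
    unfolding FF_def by (rule shift[OF p pM])
  also have "\<dots> = (\<Sum>d\<in>DD M. of_int (nu p d) * divisor_sigma s (p * (p * M) div d^2))"
    by (rule shift[OF p M])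
  also have "\<dots> = (\<Sum>d\<in>DD M. of_int (nu p d) * divisor_sigma s (p * (p * (M div d^2))))"
    by (rule sum.cong) (auto simp: DD_def div_mult_swap)
  finally show ?thesis .
qed

lemma Y_pos: "d \<in> DD M \<Longrightarrow> M > 0 \<Longrightarrow> M div d^2 > 0"
  by (auto simp: DD_def dvd_div_eq_0_iff dest: dvd_imp_le)

lemma main_pp:
  assumes p: "prime p" and M: "M > 0"
  shows "g_fun k (p * (p * M)) = real p powi (k - 1) * g_fun k (p * M)"
proof -
  define s where "s = k - 1"
  define P where "P = real p powi s"
  have p0: "p > 0" using p by (simp add: prime_gt_0_nat)
  have pM: "p * M > 0" "p * (p * M) > 0" using p0 M by auto
  have A: "FF p s (p * (p * M)) = (\<Sum>d\<in>DD M. of_int (nu p d) * tau p s (M div d^2)) + P * FF p s (p * M)"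
  proof -
    have "FF p s (p * (p * M)) = (\<Sum>d\<in>DD M. of_int (nu p d) * (tau p s (M div d^2) + P * divisor_sigma s (p * (M div d^2))))"
      unfolding FF_pp[OF p M]
    proof (rule sum.cong)
      fix d assume d: "d \<in> DD M"
      have Yd: "M div d^2 > 0" using Y_pos d M .
      have pYd: "p * (M div d^2) > 0" using p0 Yd by simp
      show "of_int (nu p d) * divisor_sigma s (p * (p * (M div d^2))) = of_int (nu p d) * (tau p s (M div d^2) + P * divisor_sigma s (p * (M div d^2)))"
        by (simp only: sigma_p[OF p pYd] tau_p[OF p] P_def)
    qed simp
    also have "\<dots> = (\<Sum>d\<in>DD M. of_int (nu p d) * tau p s (M div d^2)) + P * FF p s (p * M)"
      unfolding FF_p[OF p M] sum_distrib_left distrib_left sum.distrib mult.left_commute[of P] ..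
    finally show ?thesis .
  qed
  have B: "(\<Sum>d\<in>DD M. of_int (nu p d) * tau p s (M div d^2)) - FF p s M = - P * FF' p s (p * M)"
  proof (cases "p dvd M")
    case False
    have "(\<Sum>d\<in>DD M. of_int (nu p d) * tau p s (M div d^2)) = FF p s M"
      unfolding FF_def
    proof (rule sum.cong)
      fix d assume d: "d \<in> DD M"
      have "d^2 * (M div d^2) = M" using d by (simp add: DD_def)
      then have "\<not> p dvd M div d^2" using False by (metis dvd_mult)
      then show "of_int (nu p d) * tau p s (M div d^2) = of_int (nu p d) * divisor_sigma s (M div d^2)"
        by (simp add: tau_coprime)
    qed simp
    then show ?thesis using FF'_empty[OF p False] by simp
  next
    case True
    then obtain Y where Y: "M = p * Y" by blast
    have Y0: "Y > 0" using Y M by simp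
    have "(\<Sum>d\<in>DD M. of_int (nu p d) * tau p s (M div d^2)) - FF p s M
        = (\<Sum>d\<in>DD M. of_int (nu p d) * (tau p s (M div d^2) - divisor_sigma s (M div d^2)))"
      unfolding FF_def right_diff_distrib sum_subtractf ..
    also have "\<dots> = (\<Sum>d\<in>DD Y. of_int (nu p d) * (tau p s (p * Y div d^2) - divisor_sigma s (p * Y div d^2)))"
      unfolding Y by (rule shift[OF p Y0])
    also have "\<dots> = (\<Sum>d\<in>DD Y. of_int (nu p d) * (- P * divisor_sigma s (Y div d^2)))"
    proof (rule sum.cong)
      fix d assume d: "d \<in> DD Y"
      have Yd: "Y div d^2 > 0" using Y_pos d Y0 .
      have e: "p * Y div d^2 = p * (Y div d^2)" using d by (simp add: DD_def div_mult_swap)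
      show "of_int (nu p d) * (tau p s (p * Y div d^2) - divisor_sigma s (p * Y div d^2)) = of_int (nu p d) * (- P * divisor_sigma s (Y div d^2))"
        unfolding e sigma_p[OF p Yd] tau_p[OF p] P_def by simp
    qed simp
    also have "\<dots> = - P * FF p s Y"
      unfolding FF_def sum_distrib_left by (rule sum.cong) (simp_all only: mult.left_commute)
    also have "FF p s Y = FF' p s (p * M)"
      unfolding Y by (rule FF'_pp[OF p, symmetric])
    finally show ?thesis .
  qed
  have "g_fun k (p * (p * M)) = FF p s (p * (p * M)) - FF' p s (p * (p * M))"
    unfolding s_def by (rule g_split[OF p pM(2)])
  also have "\<dots> = P * (FF p s (p * M) - FF' p s (p * M))"
    using A B FF'_pp[OF p, of s M] unfolding right_diff_distrib mult_minus_left by linarith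
  also have "FF p s (p * M) - FF' p s (p * M) = g_fun k (p * M)"
    unfolding s_def by (rule g_split[OF p pM(1), symmetric])
  finally show ?thesis unfolding P_def s_def .
qed

lemma main_coprime:
  assumes p: "prime p" and m: "m > 0" and np: "\<not> p dvd m"
  shows "g_fun k (m * p) = (real p powi (k - 1) + 1) * g_fun k m"
proof -
  have DDeq: "{d. 0 < d \<and> d^2 dvd m * p} = {d. 0 < d \<and> d^2 dvd m}"
  proof (intro equalityI subsetI)
    fix d assume d: "d \<in> {d. 0 < d \<and> d^2 dvd m * p}"
    show "d \<in> {d. 0 < d \<and> d^2 dvd m}"
    proof (cases "p dvd d")
      case True
      then obtain c where c: "d = p * c" by blast
      have "p * (p * c^2) dvd p * m" using d prime_gt_0_nat[OF p] unfolding c by (simp add: power2_eq_square mult.commute mult.left_commute)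
      then have "p * c^2 dvd m" using p using not_prime_0 by auto
      then have "p dvd m" by (metis dvd_mult_left)
      then show ?thesis using np by simp
    next
      case False
      then have "coprime (d^2) p" using p by (metis coprime_commute coprime_power_left_iff prime_imp_coprime)
      then show ?thesis using d by (auto simp: coprime_dvd_mult_left_iff)
    qed
  qed auto
  have "g_fun k (m * p) = (\<Sum>d\<in>{d. 0 < d \<and> d^2 dvd m}. of_int (moebius_mu d) * divisor_sigma (k - 1) (m * p div d^2))"
    unfolding g_fun_def DDeq ..
  also have "\<dots> = (\<Sum>d\<in>{d. 0 < d \<and> d^2 dvd m}. (real p powi (k - 1) + 1) * (of_int (moebius_mu d) * divisor_sigma (k - 1) (m div d^2)))"
  proof (rule sum.cong)
    fix d assume d: "d \<in> {d. 0 < d \<and> d^2 dvd m}"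
    have e: "m * p div d^2 = p * (m div d^2)" using d by (auto simp: div_mult_swap mult.commute)
    have Y0: "m div d^2 > 0" using Y_pos[of d m] d m by (simp add: DD_def)
    have "d^2 * (m div d^2) = m" using d by simp
    then have "\<not> p dvd m div d^2" using np by (metis dvd_mult)
    then show "of_int (moebius_mu d) * divisor_sigma (k - 1) (m * p div d^2) = (real p powi (k - 1) + 1) * (of_int (moebius_mu d) * divisor_sigma (k - 1) (m div d^2))"
      unfolding e sigma_p[OF p Y0] by (simp add: tau_coprime algebra_simps)
  qed simp
  also have "\<dots> = (real p powi (k - 1) + 1) * g_fun k m"
    unfolding g_fun_def by (simp add: sum_distrib_left)
  finally show ?thesis .
qed

theorem lemma4p1:
  fixes k :: int and m p :: nat
  assumes "m > 0" and "prime p"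
  shows "(\<not> p dvd m \<longrightarrow> g_fun k (m * p) = (real p powi (k - 1) + 1) * g_fun k m)
       \<and> (p dvd m \<longrightarrow> g_fun k (m * p) = real p powi (k - 1) * g_fun k m)"
proof (intro conjI impI)
  assume "\<not> p dvd m"
  then show "g_fun k (m * p) = (real p powi (k - 1) + 1) * g_fun k m"
    using main_coprime assms by blast
next
  assume "p dvd m"
  then obtain M where M: "m = p * M" by blast
  then have "M > 0" using assms by simp
  then show "g_fun k (m * p) = real p powi (k - 1) * g_fun k m"
    using main_pp[OF assms(2), of M k] M by (simp add: mult.commute)
qed

end
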